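(* Let $N\ge 2$ be an integer. Let $G$ be a finite, simple, connected, bipartite graph with at least one edge and adjacency matrix $A$. Suppose that for every edge $\{p,q\}$ of $G$ and every integer $j\ge1$, $(A^{2j+1})_{pq}=\frac{(N-1)^{2j+1}+1}{N}$. Then: (a) the spectral radius of $A$ equals $N-1$; (b) $G$ is regular, with every vertex of degree $N-1$. *)

theory Defs
  imports "Jordan_Normal_Form.Spectral_Radius"
begin

definition simple_graph :: "nat \<Rightarrow> (nat \<Rightarrow> nat \<Rightarrow> bool) \<Rightarrow> bool" where
  "simple_graph n E \<longleftrightarrow> (\<forall>i j. E i j \<longrightarrow> i < n \<and> j < n)
                        \<and> (\<forall>i j. E i j \<longrightarrow> E j i) \<and> (\<forall>i. \<not> E i i)"

definition connected_graph :: "nat \<Rightarrow> (nat \<Rightarrow> nat \<Rightarrow> bool) \<Rightarrow> bool" where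
  "connected_graph n E \<longleftrightarrow> (\<forall>i j. i < n \<longrightarrow> j < n \<longrightarrow> E\<^sup>*\<^sup>* i j)"

definition bipartite_graph :: "nat \<Rightarrow> (nat \<Rightarrow> nat \<Rightarrow> bool) \<Rightarrow> bool" where
  "bipartite_graph n E \<longleftrightarrow> (\<exists>S. S \<subseteq> {0..<n} \<and>
      (\<forall>i j. E i j \<longrightarrow> (i \<in> S \<longleftrightarrow> j \<notin> S)))"

definition adj_mat :: "nat \<Rightarrow> (nat \<Rightarrow> nat \<Rightarrow> bool) \<Rightarrow> int mat" where
  "adj_mat n E = mat n n (\<lambda>(i, j). if E i j then 1 else 0)"

definition degree :: "nat \<Rightarrow> (nat \<Rightarrow> nat \<Rightarrow> bool) \<Rightarrow> nat \<Rightarrow> nat" where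
  "degree n E v = card {u. u < n \<and> E v u}"

end

theory Submission
  imports Defs
begin

definition aa :: "(nat \<Rightarrow> nat \<Rightarrow> bool) \<Rightarrow> nat \<Rightarrow> nat \<Rightarrow> real" where
  "aa E p q = (if E p q then 1 else 0)"

fun Wr :: "nat \<Rightarrow> (nat \<Rightarrow> nat \<Rightarrow> bool) \<Rightarrow> nat \<Rightarrow> nat \<Rightarrow> nat \<Rightarrow> real" where
  "Wr n E 0 p q = (if p = q then 1 else 0)"
| "Wr n E (Suc k) p q = (\<Sum>r<n. Wr n E k p r * aa E r q)"

lemma adj_carrier: "adj_mat n E \<in> carrier_mat n n"
  by (simp add: adj_mat_def)

lemma adj_entry: "r < n \<Longrightarrow> q < n \<Longrightarrow> adj_mat n E $$ (r,q) = (if E r q then 1 else 0)"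
  by (simp add: adj_mat_def)

lemma pow_entry_Suc:
  fixes A :: "'a::comm_semiring_1 mat"
  assumes A: "A \<in> carrier_mat n n" and pq: "p < n" "q < n"
  shows "(A ^\<^sub>m Suc k) $$ (p,q) = (\<Sum>r<n. (A ^\<^sub>m k) $$ (p,r) * A $$ (r,q))"
proof -
  have "(A ^\<^sub>m Suc k) $$ (p,q) = (A ^\<^sub>m k * A) $$ (p,q)" by simp
  also have "\<dots> = row (A ^\<^sub>m k) p \<bullet> col A q"
    using A pq by (intro index_mult_mat(1)) auto
  also have "\<dots> = (\<Sum>r<n. (A ^\<^sub>m k) $$ (p,r) * A $$ (r,q))"
    unfolding scalar_prod_def using A pq
    by (auto simp: lessThan_atLeast0 intro!: sum.cong)
  finally show ?thesis .
qed

lemma W_mat: "p < n \<Longrightarrow> q < n \<Longrightarrow> real_of_int ((adj_mat n E ^\<^sub>m k) $$ (p,q)) = Wr n E k p q"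
proof (induction k arbitrary: q)
  case 0
  then show ?case using adj_carrier[of n E] by (simp add: one_mat_def)
next
  case (Suc k)
  have "(adj_mat n E ^\<^sub>m Suc k) $$ (p,q) = (\<Sum>r<n. (adj_mat n E ^\<^sub>m k) $$ (p,r) * adj_mat n E $$ (r,q))"
    by (rule pow_entry_Suc[OF adj_carrier Suc.prems])
  also have "\<dots> = (\<Sum>r<n. (adj_mat n E ^\<^sub>m k) $$ (p,r) * (if E r q then 1 else 0))"
    using Suc.prems by (intro sum.cong) (auto simp: adj_entry)
  finally have "real_of_int ((adj_mat n E ^\<^sub>m Suc k) $$ (p,q)) = (\<Sum>r<n. real_of_int ((adj_mat n E ^\<^sub>m k) $$ (p,r)) * aa E r q)"
    by (auto intro!: sum.cong simp: aa_def)
  also have "\<dots> = (\<Sum>r<n. Wr n E k p r * aa E r q)"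
    using Suc by (intro sum.cong) auto
  finally show ?case by simp
qed

lemma W_cmat: "p < n \<Longrightarrow> q < n \<Longrightarrow> ((map_mat of_int (adj_mat n E) :: complex mat) ^\<^sub>m k) $$ (p,q) = of_real (Wr n E k p q)"
proof -
  assume pq: "p < n" "q < n"
  have "(map_mat of_int (adj_mat n E) :: complex mat) ^\<^sub>m k = map_mat of_int (adj_mat n E ^\<^sub>m k)"
    by (rule of_int_hom.mat_hom_pow[OF adj_carrier, symmetric])
  then have "((map_mat of_int (adj_mat n E) :: complex mat) ^\<^sub>m k) $$ (p,q) = of_int ((adj_mat n E ^\<^sub>m k) $$ (p,q))"
    using pq adj_carrier[of n E] by simp
  also have "\<dots> = of_real (real_of_int ((adj_mat n E ^\<^sub>m k) $$ (p,q)))" by simp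
  finally show ?thesis using W_mat[OF pq] by simp
qed

lemma W_add: "q < n \<Longrightarrow> Wr n E (i + j) p q = (\<Sum>r<n. Wr n E i p r * Wr n E j r q)"
proof (induction j arbitrary: q)
  case 0
  have "(\<Sum>r<n. Wr n E i p r * Wr n E 0 r q) = (\<Sum>r\<in>{q}. Wr n E i p r)"
    using 0 by (intro sum.mono_neutral_cong_right) auto
  then show ?case by simp
next
  case (Suc j)
  have "Wr n E (i + Suc j) p q = (\<Sum>s<n. Wr n E (i+j) p s * aa E s q)" by simp
  also have "\<dots> = (\<Sum>s<n. (\<Sum>r<n. Wr n E i p r * Wr n E j r s) * aa E s q)"
    using Suc.IH by simp
  also have "\<dots> = (\<Sum>r<n. Wr n E i p r * (\<Sum>s<n. Wr n E j r s * aa E s q))"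
    unfolding sum_distrib_left sum_distrib_right mult.assoc
    by (rule sum.swap)
  finally show ?case by simp
qed

lemma W1: "p < n \<Longrightarrow> Wr n E 1 p q = aa E p q"
proof -
  assume p: "p < n"
  have "Wr n E 1 p q = (\<Sum>r<n. (if p = r then 1 else 0) * aa E r q)" by simp
  also have "\<dots> = (\<Sum>r<n. if p = r then aa E r q else 0)" by (intro sum.cong) auto
  finally show ?thesis using p by simp
qed


declare Wr.simps(2)[simp del]

lemma W_sym:
  assumes sym: "\<And>i j. E i j \<Longrightarrow> E j i"
  shows "p < n \<Longrightarrow> q < n \<Longrightarrow> Wr n E k p q = Wr n E k q p"
proof (induction k arbitrary: p q)
  case 0
  then show ?case by simp
next
  case (Suc k)
  have "Wr n E (k + 1) p q = (\<Sum>r<n. Wr n E k p r * Wr n E 1 r q)"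
    by (rule W_add[OF Suc.prems(2)])
  also have "\<dots> = (\<Sum>r<n. Wr n E 1 q r * Wr n E k r p)"
  proof (intro sum.cong refl)
    fix r assume r: "r \<in> {..<n}"
    then have r': "r < n" by simp
    have "aa E r q = aa E q r" using sym unfolding aa_def by auto
    moreover have "Wr n E 1 r q = aa E r q" by (rule W1[OF r'])
    moreover have "Wr n E 1 q r = aa E q r" by (rule W1[OF Suc.prems(2)])
    moreover have "Wr n E k p r = Wr n E k r p" by (rule Suc.IH[OF Suc.prems(1) r'])
    ultimately show "Wr n E k p r * Wr n E 1 r q = Wr n E 1 q r * Wr n E k r p"
      by (simp only: mult.commute)
  qed
  also have "\<dots> = Wr n E (1 + k) q p"
    by (rule W_add[OF Suc.prems(1), symmetric])
  finally show ?case by simp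
qed

lemma W_parity:
  assumes bip: "\<And>i j. E i j \<Longrightarrow> (i \<in> S \<longleftrightarrow> j \<notin> S)"
  shows "Wr n E k p q \<noteq> 0 \<Longrightarrow> ((p \<in> S) \<longleftrightarrow> (q \<in> S)) \<longleftrightarrow> even k"
proof (induction k arbitrary: q)
  case 0
  then show ?case by (simp split: if_splits)
next
  case (Suc k)
  from Suc.prems have "(\<Sum>r<n. Wr n E k p r * aa E r q) \<noteq> 0" by (simp add: Wr.simps(2))
  then obtain r where r: "Wr n E k p r * aa E r q \<noteq> 0"
  proof -
    assume h: "\<And>r. Wr n E k p r * aa E r q \<noteq> 0 \<Longrightarrow> thesis"
    show thesis
    proof (rule ccontr)
      assume "\<not> thesis"
      then have "\<forall>r\<in>{..<n}. Wr n E k p r * aa E r q = 0" using h by blast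
      then have "(\<Sum>r<n. Wr n E k p r * aa E r q) = 0" by (rule sum.neutral)
      then show False using \<open>(\<Sum>r<n. Wr n E k p r * aa E r q) \<noteq> 0\<close> by simp
    qed
  qed
  then have "Wr n E k p r \<noteq> 0" "E r q" by (auto simp: aa_def split: if_splits)
  with Suc.IH[of r] bip[of r q] show ?case by auto
qed

definition PW :: "nat \<Rightarrow> (nat \<Rightarrow> nat \<Rightarrow> bool) \<Rightarrow> nat \<Rightarrow> (nat \<Rightarrow> real) \<Rightarrow> nat \<Rightarrow> nat \<Rightarrow> real" where
  "PW n E K c p q = (\<Sum>i<K. c i * Wr n E i p q)"

lemma PW_prod:
  assumes q: "q < n"
  shows "(\<Sum>r<n. PW n E K c p r * PW n E L d r q)
       = (\<Sum>i<K. \<Sum>j<L. c i * d j * Wr n E (i + j) p q)"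
proof -
  have "(\<Sum>r<n. PW n E K c p r * PW n E L d r q)
      = (\<Sum>r<n. \<Sum>i<K. \<Sum>j<L. (c i * Wr n E i p r) * (d j * Wr n E j r q))"
    unfolding PW_def by (simp add: sum_product)
  also have "\<dots> = (\<Sum>i<K. \<Sum>r<n. \<Sum>j<L. (c i * Wr n E i p r) * (d j * Wr n E j r q))"
    by (rule sum.swap)
  also have "\<dots> = (\<Sum>i<K. \<Sum>j<L. \<Sum>r<n. (c i * Wr n E i p r) * (d j * Wr n E j r q))"
    by (intro sum.cong refl sum.swap)
  also have "\<dots> = (\<Sum>i<K. \<Sum>j<L. c i * d j * (\<Sum>r<n. Wr n E i p r * Wr n E j r q))"
    by (intro sum.cong refl) (simp add: sum_distrib_left mult_ac)
  also have "\<dots> = (\<Sum>i<K. \<Sum>j<L. c i * d j * Wr n E (i + j) p q)"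
    using W_add[OF q] by simp
  finally show ?thesis .
qed

lemma PW_sym:
  assumes sym: "\<And>i j. E i j \<Longrightarrow> E j i" and "p < n" "q < n"
  shows "PW n E K c p q = PW n E K c q p"
  unfolding PW_def
proof (intro sum.cong refl)
  fix i show "c i * Wr n E i p q = c i * Wr n E i q p"
    using W_sym[OF sym assms(2,3), where k=i] by (rule arg_cong)
qed

lemma sum6: fixes f :: "nat \<Rightarrow> 'a::comm_monoid_add" shows "(\<Sum>i<6. f i) = f 0 + f 1 + f 2 + f 3 + f 4 + f 5"
  by (simp add: eval_nat_numeral)
lemma sum5: fixes f :: "nat \<Rightarrow> 'a::comm_monoid_add" shows "(\<Sum>i<5. f i) = f 0 + f 1 + f 2 + f 3 + f 4"
  by (simp add: eval_nat_numeral)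
lemma sum4: fixes f :: "nat \<Rightarrow> 'a::comm_monoid_add" shows "(\<Sum>i<4. f i) = f 0 + f 1 + f 2 + f 3"
  by (simp add: eval_nat_numeral)
lemma sum3: fixes f :: "nat \<Rightarrow> 'a::comm_monoid_add" shows "(\<Sum>i<3. f i) = f 0 + f 1 + f 2"
  by (simp add: eval_nat_numeral)
lemma sum2: fixes f :: "nat \<Rightarrow> 'a::comm_monoid_add" shows "(\<Sum>i<2. f i) = f 0 + f 1"
  by (simp add: eval_nat_numeral)


definition cc :: "real \<Rightarrow> nat \<Rightarrow> real" where "cc x k = (\<Sum>i<k. (-x)^i)"

lemma cc_eq: "x + 1 \<noteq> 0 \<Longrightarrow> odd k \<Longrightarrow> (x^k+1)/(x+1) = cc x k"
proof -
  assume nz: "x + 1 \<noteq> 0" and k: "odd k"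
  have "(-x)^k - 1 = (-x - 1) * cc x k" unfolding cc_def by (rule power_diff_1_eq)
  then have "x^k + 1 = (x + 1) * cc x k" using k by (simp add: algebra_simps)
  then show ?thesis using nz by (simp add: field_simps)
qed

lemma sucnum: "Suc (Suc 0) = 2" "Suc (Suc (Suc 0)) = 3" "Suc (Suc (Suc (Suc 0))) = 4"
  "Suc (Suc (Suc (Suc (Suc 0)))) = 5"
  by simp_all

lemma cc_vals: "cc x 1 = 1" "cc x (Suc 0) = 1" "cc x 3 = 1 - x + x^2" "cc x 5 = 1 - x + x^2 - x^3 + x^4"
  "cc x 7 = 1 - x + x^2 - x^3 + x^4 - x^5 + x^6"
  "cc x 9 = 1 - x + x^2 - x^3 + x^4 - x^5 + x^6 - x^7 + x^8"
  by (simp_all add: cc_def eval_nat_numeral algebra_simps)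

lemma cadj_carrier: "(map_mat of_int (adj_mat n E) :: complex mat) \<in> carrier_mat n n"
  by (simp add: adj_mat_def)

lemma mult_vec_entry:
  fixes B :: "complex mat"
  assumes "B \<in> carrier_mat n n" "v \<in> carrier_vec n" "p < n"
  shows "(B *\<^sub>v v) $ p = (\<Sum>q<n. B $$ (p,q) * v $ q)"
  using assms by (simp add: scalar_prod_def lessThan_atLeast0)

lemma eig_from:
  fixes y :: "nat \<Rightarrow> real"
  assumes pz: "pz < n" "y pz \<noteq> 0"
    and ev: "\<And>p. p < n \<Longrightarrow> (\<Sum>r<n. aa E p r * y r) = \<mu> * y p"
  shows "eigenvalue (map_mat of_int (adj_mat n E) :: complex mat) (of_real \<mu>)"
proof -
  let ?A = "map_mat of_int (adj_mat n E) :: complex mat"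
  define v where "v = vec n (\<lambda>r. complex_of_real (y r))"
  have A: "?A \<in> carrier_mat n n" by (rule cadj_carrier)
  have v: "v \<in> carrier_vec n" unfolding v_def by simp
  have nz: "v \<noteq> 0\<^sub>v n"
  proof
    assume "v = 0\<^sub>v n"
    then have "v $ pz = 0" using pz by simp
    then show False using pz unfolding v_def by simp
  qed
  have "?A *\<^sub>v v = of_real \<mu> \<cdot>\<^sub>v v"
  proof (rule eq_vecI)
    fix p assume "p < dim_vec (of_real \<mu> \<cdot>\<^sub>v v)"
    then have p: "p < n" using v by simp
    have "(?A *\<^sub>v v) $ p = (\<Sum>q<n. ?A $$ (p,q) * v $ q)" by (rule mult_vec_entry[OF A v p])
    also have "\<dots> = (\<Sum>q<n. of_real (aa E p q * y q))"
      using p by (intro sum.cong refl) (auto simp: v_def adj_mat_def aa_def)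
    also have "\<dots> = of_real (\<Sum>q<n. aa E p q * y q)" by simp
    also have "\<dots> = (of_real \<mu> \<cdot>\<^sub>v v) $ p" using ev[OF p] p v by (simp add: v_def)
    finally show "(?A *\<^sub>v v) $ p = (of_real \<mu> \<cdot>\<^sub>v v) $ p" .
  next
    show "dim_vec (?A *\<^sub>v v) = dim_vec (of_real \<mu> \<cdot>\<^sub>v v)" using A v by simp
  qed
  then show ?thesis unfolding eigenvalue_def eigenvector_def using v nz A by auto
qed

lemma eig_poly:
  fixes c :: "nat \<Rightarrow> real"
  assumes rel: "\<And>p q. p < n \<Longrightarrow> q < n \<Longrightarrow> PW n E K c p q = 0"
    and ev: "eigenvalue (map_mat of_int (adj_mat n E) :: complex mat) lam"
  shows "(\<Sum>i<K. of_real (c i) * lam^i) = 0"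
proof -
  let ?A = "map_mat of_int (adj_mat n E) :: complex mat"
  have A: "?A \<in> carrier_mat n n" by (rule cadj_carrier)
  from ev obtain v where evv: "eigenvector ?A v lam" unfolding eigenvalue_def by auto
  then have v: "v \<in> carrier_vec n" and nz: "v \<noteq> 0\<^sub>v n" using A unfolding eigenvector_def by auto
  obtain p where p: "p < n" "v $ p \<noteq> 0"
  proof -
    assume h: "\<And>p. p < n \<Longrightarrow> v $ p \<noteq> 0 \<Longrightarrow> thesis"
    show thesis
    proof (rule ccontr)
      assume "\<not> thesis"
      then have "\<forall>p<n. v $ p = 0" using h by blast
      then have "v = 0\<^sub>v n" using v by (intro eq_vecI) auto
      then show False using nz by simp
    qed
  qed
  have pw: "lam^i * v $ p = (\<Sum>q<n. of_real (Wr n E i p q) * v $ q)" for i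
  proof -
    have "(?A ^\<^sub>m i *\<^sub>v v) = lam^i \<cdot>\<^sub>v v" by (rule eigenvector_pow[OF A evv])
    then have "(?A ^\<^sub>m i *\<^sub>v v) $ p = lam^i * v $ p" using p v by simp
    moreover have "(?A ^\<^sub>m i *\<^sub>v v) $ p = (\<Sum>q<n. (?A ^\<^sub>m i) $$ (p,q) * v $ q)"
      by (rule mult_vec_entry[OF pow_carrier_mat[OF A] v p(1)])
    moreover have "\<dots> = (\<Sum>q<n. of_real (Wr n E i p q) * v $ q)"
      using p by (intro sum.cong refl) (simp add: W_cmat)
    ultimately show ?thesis by simp
  qed
  have "(\<Sum>i<K. of_real (c i) * lam^i) * v $ p = (\<Sum>i<K. of_real (c i) * (lam^i * v $ p))"
    by (simp add: sum_distrib_left sum_distrib_right mult_ac)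
  also have "\<dots> = (\<Sum>i<K. \<Sum>q<n. of_real (c i) * (of_real (Wr n E i p q) * v $ q))"
    by (simp add: pw sum_distrib_left)
  also have "\<dots> = (\<Sum>q<n. \<Sum>i<K. of_real (c i) * (of_real (Wr n E i p q) * v $ q))"
    by (rule sum.swap)
  also have "\<dots> = (\<Sum>q<n. of_real (PW n E K c p q) * v $ q)"
    unfolding PW_def by (intro sum.cong refl) (simp add: sum_distrib_left sum_distrib_right mult_ac)
  also have "\<dots> = 0" using rel p by simp
  finally show ?thesis using p by simp
qed

definition cZ :: "real \<Rightarrow> nat \<Rightarrow> real" where "cZ x = (\<lambda>i::nat. if i = 1 then x^2 else if i = 3 then -(x^2+1) else if i = 5 then 1 else (0::real))"

definition hh :: "real \<Rightarrow> nat \<Rightarrow> real" where "hh x = (\<lambda>i::nat. if i = 0 then x^2 else if i = 2 then -(x^2+1) else if i = 4 then 1 else (0::real))"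

definition gg :: "real \<Rightarrow> nat \<Rightarrow> real" where "gg x = (\<lambda>i::nat. if i = 1 then -x else if i = 2 then -1 else if i = 3 then x else if i = 4 then 1 else (0::real))"

definition cZ1 :: "nat \<Rightarrow> real" where "cZ1 = (\<lambda>i::nat. if i = 1 then -1 else if i = 3 then 1 else (0::real))"

context
  fixes n :: nat and E :: "nat \<Rightarrow> nat \<Rightarrow> bool" and S :: "nat set" and x :: real
  assumes sym: "\<And>i j. E i j \<Longrightarrow> E j i"
    and rng: "\<And>i j. E i j \<Longrightarrow> i < n \<and> j < n"
    and bip: "\<And>i j. E i j \<Longrightarrow> (i \<in> S \<longleftrightarrow> j \<notin> S)"
    and x1: "x \<ge> 1"
    and hyp: "\<And>p q j. E p q \<Longrightarrow> j \<ge> 1 \<Longrightarrow> Wr n E (2*j+1) p q = (x^(2*j+1)+1)/(x+1)"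
begin

lemma nz: "x + 1 \<noteq> 0"
  using x1 by auto

lemma Wedge0: "E p q \<Longrightarrow> Wr n E k p q = (if even k then 0 else (x^k+1)/(x+1))"
proof -
  assume e: "E p q"
  show ?thesis
  proof (cases "even k")
    case True
    have "Wr n E k p q = 0"
    proof (rule ccontr)
      assume "Wr n E k p q \<noteq> 0"
      from W_parity[OF bip this] True bip[OF e] show False by auto
    qed
    then show ?thesis using True by simp
  next
    case False
    then obtain j where k: "k = 2*j+1" by (metis oddE)
    show ?thesis
    proof (cases "j = 0")
      case True
      then have "Wr n E k p q = 1" using W1[of p n E q] rng[OF e] e k by (simp add: aa_def)
      then show ?thesis using True k x1 by simp
    next
      case False
      then show ?thesis using hyp[OF e, of j] k by simp
    qed
  qed
qed

lemma Wedge: "E p q \<Longrightarrow> Wr n E k p q = (if even k then 0 else cc x k)"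
  using Wedge0[of p q k] cc_eq[OF nz, of k] by simp

lemma Wdiag0: "p < n \<Longrightarrow> Wr n E k p p = (if k = 0 then 1 else if odd k then 0
    else real (degree n E p) * (x^(k-1)+1)/(x+1))"
proof -
  assume p: "p < n"
  consider "k = 0" | "odd k" | "k \<noteq> 0" "even k" by blast
  then show ?thesis
  proof cases
    case 1 then show ?thesis by simp
  next
    case 2
    have "Wr n E k p p = 0"
    proof (rule ccontr)
      assume "Wr n E k p p \<noteq> 0"
      from W_parity[OF bip this] 2 show False by auto
    qed
    then show ?thesis using 2 odd_pos by auto
  next
    case 3
    have k: "k = 1 + (k - 1)" using 3 by simp
    have oddk: "odd (k - 1)" using 3 by simp
    have "Wr n E k p p = Wr n E (1 + (k-1)) p p" using k by simp
    also have "\<dots> = (\<Sum>r<n. Wr n E 1 p r * Wr n E (k-1) r p)" by (rule W_add[OF p])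
    also have "\<dots> = (\<Sum>r<n. if E p r then (x^(k-1)+1)/(x+1) else 0)"
    proof (intro sum.cong refl)
      fix r assume r: "r \<in> {..<n}"
      show "Wr n E 1 p r * Wr n E (k-1) r p = (if E p r then (x^(k-1)+1)/(x+1) else 0)"
        using W1[OF p, of E r] Wedge0[OF sym, of p r] oddk by (auto simp: aa_def)
    qed
    also have "\<dots> = (\<Sum>r\<in>{r\<in>{..<n}. E p r}. (x^(k-1)+1)/(x+1))"
      by (rule sum.inter_filter[symmetric]) simp
    also have "\<dots> = real (degree n E p) * ((x^(k-1)+1)/(x+1))"
      unfolding degree_def by (simp add: Collect_conj_eq lessThan_def Int_commute)
    finally show ?thesis using 3 by simp
  qed
qed

lemma Wdiag: "p < n \<Longrightarrow> Wr n E k p p = (if k = 0 then 1 else if odd k then 0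
    else real (degree n E p) * cc x (k - 1))"
proof -
  assume p: "p < n"
  show ?thesis
  proof (cases "k \<noteq> 0 \<and> even k")
    case True
    have e1: "Wr n E k p p = real (degree n E p) * ((x^(k-1)+1)/(x+1))" using Wdiag0[OF p, of k] True by simp
    have e2: "(x^(k-1)+1)/(x+1) = cc x (k-1)" by (rule cc_eq[OF nz]) (use True in simp)
    show ?thesis unfolding e1 e2 using True by simp
  next
    case False
    then show ?thesis using Wdiag0[OF p, of k] by auto
  qed
qed

lemma sq_zero:
  assumes "p < n" and "(\<Sum>q<n. PW n E K c p q * PW n E K c q p) = 0"
  shows "q < n \<Longrightarrow> PW n E K c p q = 0"
proof -
  assume q: "q < n"
  have "(\<Sum>q<n. (PW n E K c p q)^2) = 0"
    using assms(2) PW_sym[OF sym assms(1)] by (simp add: power2_eq_square)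
  then have "\<forall>q\<in>{..<n}. (PW n E K c p q)^2 = 0"
    by (subst (asm) sum_nonneg_eq_0_iff) auto
  then show ?thesis using q by simp
qed


lemma relZ: "p < n \<Longrightarrow> q < n \<Longrightarrow> PW n E 6 (cZ x) p q = 0"
proof -
  assume p: "p < n" and q: "q < n"
  have "(\<Sum>q<n. PW n E 6 (cZ x) p q * PW n E 6 (cZ x) q p) = (\<Sum>i<6. \<Sum>j<6. (cZ x) i * (cZ x) j * Wr n E (i + j) p p)"
    by (rule PW_prod[OF p])
  also have "\<dots> = 0" using x1
    apply (simp add: Wdiag[OF p] cZ_def sum6 cc_vals)
    by (simp add: cc_def eval_nat_numeral algebra_simps)
  finally show ?thesis using sq_zero[OF p _ q] by blast
qed


lemma relZ1: "x = 1 \<Longrightarrow> p < n \<Longrightarrow> q < n \<Longrightarrow> PW n E 4 cZ1 p q = 0"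
proof -
  assume x: "x = 1" and p: "p < n" and q: "q < n"
  have "(\<Sum>q<n. PW n E 4 cZ1 p q * PW n E 4 cZ1 q p) = (\<Sum>i<4. \<Sum>j<4. cZ1 i * cZ1 j * Wr n E (i + j) p p)"
    by (rule PW_prod[OF p])
  also have "\<dots> = 0" using x
    by (simp add: Wdiag[OF p] cZ1_def sum4 cc_vals)
  finally show ?thesis using sq_zero[OF p _ q] by blast
qed


lemma deg_le: "p < n \<Longrightarrow> real (degree n E p) \<le> x"
proof -
  assume p: "p < n"
  have "(\<Sum>q<n. PW n E 5 (hh x) p q * PW n E 5 (hh x) q p) = (\<Sum>q<n. (PW n E 5 (hh x) p q)^2)"
    using PW_sym[OF sym p] by (simp add: power2_eq_square)
  then have ge: "(\<Sum>q<n. PW n E 5 (hh x) p q * PW n E 5 (hh x) q p) \<ge> 0"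
    by (simp add: sum_nonneg)
  have "(\<Sum>q<n. PW n E 5 (hh x) p q * PW n E 5 (hh x) q p) = (\<Sum>i<5. \<Sum>j<5. (hh x) i * (hh x) j * Wr n E (i + j) p p)"
    by (rule PW_prod[OF p])
  also have "\<dots> = x^4 - x^3 * real (degree n E p)" using x1
    apply (simp add: Wdiag[OF p] hh_def sum5 cc_vals)
    by (simp add: cc_def eval_nat_numeral algebra_simps)
  finally have "x^3 * real (degree n E p) \<le> x^4" using ge by simp
  moreover have "x^4 = x^3 * x" by (simp add: eval_nat_numeral)
  ultimately have "x^3 * real (degree n E p) \<le> x^3 * x" by simp
  moreover have "x^3 > 0" using x1 by simp
  ultimately show ?thesis by simp
qed


lemma edge_sum: "E p q \<Longrightarrow> x > 1 \<Longrightarrow> real (degree n E p) + real (degree n E q) \<ge> 2 * x"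
proof -
  assume e: "E p q" and xg: "x > 1"
  have p: "p < n" and q: "q < n" using rng[OF e] by auto
  let ?P = "PW n E 5 (gg x)"
  have "0 \<le> (\<Sum>r<n. (?P p r - ?P q r)^2)" by (simp add: sum_nonneg)
  also have "\<dots> = (\<Sum>r<n. ?P p r * ?P r p) + (\<Sum>r<n. ?P q r * ?P r q) - 2 * (\<Sum>r<n. ?P p r * ?P r q)"
  proof -
    have "(\<Sum>r<n. (?P p r - ?P q r)^2) = (\<Sum>r<n. ?P p r * ?P r p + ?P q r * ?P r q - 2 * (?P p r * ?P r q))"
    proof (intro sum.cong refl)
      fix r assume "r \<in> {..<n}"
      then have r: "r < n" by simp
      show "(?P p r - ?P q r)^2 = ?P p r * ?P r p + ?P q r * ?P r q - 2 * (?P p r * ?P r q)"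
        using PW_sym[OF sym p r] PW_sym[OF sym q r] by (simp add: power2_eq_square algebra_simps)
    qed
    then show ?thesis by (simp add: sum.distrib sum_subtractf sum_distrib_left)
  qed
  also have "\<dots> = (\<Sum>i<5. \<Sum>j<5. (gg x) i * (gg x) j * Wr n E (i + j) p p) + (\<Sum>i<5. \<Sum>j<5. (gg x) i * (gg x) j * Wr n E (i + j) q q)
       - 2 * (\<Sum>i<5. \<Sum>j<5. (gg x) i * (gg x) j * Wr n E (i + j) p q)"
    using PW_prod[OF p, where K=5 and c="gg x" and p=p and L=5 and d="gg x"] PW_prod[OF q, where K=5 and c="gg x" and p=q and L=5 and d="gg x"]
      PW_prod[OF q, where K=5 and c="gg x" and p=p and L=5 and d="gg x"]
    by simp
  also have "\<dots> = 2 * x^3 * (x - 1)^2 * (x + 1) * (real (degree n E p) + real (degree n E q) - 2 * x)"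
    apply (simp add: Wdiag[OF p] Wdiag[OF q] Wedge[OF e] gg_def sum5 cc_vals)
    by (simp add: cc_def eval_nat_numeral algebra_simps)
  finally have "0 \<le> 2 * x^3 * (x - 1)^2 * (x + 1) * (real (degree n E p) + real (degree n E q) - 2 * x)" .
  moreover have "2 * x^3 * (x - 1)^2 * (x + 1) > 0" using xg by simp
  ultimately show ?thesis
    by (metis diff_ge_0_iff_ge zero_le_mult_iff linorder_not_less)
qed

lemma aa_PW: "p < n \<Longrightarrow> PW n E 2 (\<lambda>i. if i = 1 then 1 else 0) p r = aa E p r"
  using W1[of p n E r] by (simp add: PW_def sum2)

lemma eig_gt: "x > 1 \<Longrightarrow> E p0 q0 \<Longrightarrow> eigenvalue (map_mat of_int (adj_mat n E) :: complex mat) (of_real x)"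
proof -
  assume xg: "x > 1" and e: "E p0 q0"
  have p0: "p0 < n" and q0: "q0 < n" using rng[OF e] by auto
  define y where "y r = PW n E 5 (gg x) r q0" for r
  have "y p0 = x^3 - x^2"
    unfolding y_def apply (simp add: PW_def sum5 gg_def Wedge[OF e] cc_vals)
    by (simp add: eval_nat_numeral algebra_simps)
  moreover have "x^3 - x^2 = x^2 * (x - 1)" by (simp add: eval_nat_numeral algebra_simps)
  moreover have "x^2 * (x - 1) > 0" using xg by simp
  ultimately have y0: "y p0 \<noteq> 0" by linarith
  show ?thesis
  proof (rule eig_from[where pz=p0 and n=n and y=y and E=E and \<mu>=x, OF p0 y0])
    fix p assume p: "p < n"
    have "(\<Sum>r<n. aa E p r * y r) = (\<Sum>r<n. PW n E 2 (\<lambda>i. if i = 1 then 1 else 0) p r * PW n E 5 (gg x) r q0)"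
      using aa_PW[OF p] by (simp add: y_def)
    also have "\<dots> = (\<Sum>i<2. \<Sum>j<5. (if i = 1 then 1 else 0) * (gg x) j * Wr n E (i + j) p q0)"
      by (rule PW_prod[OF q0])
    also have "\<dots> = - x * Wr n E 2 p q0 - Wr n E 3 p q0 + x * Wr n E 4 p q0 + Wr n E 5 p q0"
      by (simp add: sum2 sum5 gg_def sucnum)
    finally have l: "(\<Sum>r<n. aa E p r * y r) = - x * Wr n E 2 p q0 - Wr n E 3 p q0 + x * Wr n E 4 p q0 + Wr n E 5 p q0" .
    have yp: "y p = - x * Wr n E 1 p q0 - Wr n E 2 p q0 + x * Wr n E 3 p q0 + Wr n E 4 p q0"
      by (simp add: y_def PW_def sum5 gg_def)
    have "PW n E 6 (cZ x) p q0 = 0" by (rule relZ[OF p q0])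
    then have z: "Wr n E 5 p q0 = (x^2+1) * Wr n E 3 p q0 - x^2 * Wr n E 1 p q0"
      by (simp add: PW_def sum6 cZ_def algebra_simps)
    show "(\<Sum>r<n. aa E p r * y r) = x * y p"
      unfolding l yp z by (simp add: algebra_simps power2_eq_square)
  qed
qed

lemma eig_eq1: "x = 1 \<Longrightarrow> E p0 q0 \<Longrightarrow> eigenvalue (map_mat of_int (adj_mat n E) :: complex mat) (of_real x)"
proof -
  assume x: "x = 1" and e: "E p0 q0"
  have p0: "p0 < n" and q0: "q0 < n" using rng[OF e] by auto
  define y where "y r = PW n E 3 (\<lambda>i. if i = 1 \<or> i = 2 then 1 else 0) r q0" for r
  have "y p0 = 1"
    unfolding y_def by (simp add: PW_def sum3 Wedge[OF e] cc_vals)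
  then have y0: "y p0 \<noteq> 0" by simp
  show ?thesis
  proof (rule eig_from[where pz=p0 and n=n and y=y and E=E and \<mu>=x, OF p0 y0])
    fix p assume p: "p < n"
    have "(\<Sum>r<n. aa E p r * y r) = (\<Sum>r<n. PW n E 2 (\<lambda>i. if i = 1 then 1 else 0) p r * PW n E 3 (\<lambda>i. if i = 1 \<or> i = 2 then 1 else 0) r q0)"
      using aa_PW[OF p] by (simp add: y_def)
    also have "\<dots> = (\<Sum>i<2. \<Sum>j<3. (if i = 1 then 1 else 0) * (if j = 1 \<or> j = 2 then 1 else 0) * Wr n E (i + j) p q0)"
      by (rule PW_prod[OF q0])
    also have "\<dots> = Wr n E 2 p q0 + Wr n E 3 p q0"
      by (simp add: sum2 sum3 sucnum)
    finally have l: "(\<Sum>r<n. aa E p r * y r) = Wr n E 2 p q0 + Wr n E 3 p q0" .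
    have yp: "y p = Wr n E 1 p q0 + Wr n E 2 p q0"
      by (simp add: y_def PW_def sum3)
    have "PW n E 4 cZ1 p q0 = 0" by (rule relZ1[OF x p q0])
    then have z: "Wr n E 3 p q0 = Wr n E 1 p q0"
      by (simp add: PW_def sum4 cZ1_def)
    show "(\<Sum>r<n. aa E p r * y r) = x * y p"
      unfolding l yp z x by simp
  qed
qed

end

lemma norm_sq_cases:
  fixes lam :: complex and x :: real
  assumes "x \<ge> 1" and "lam = 0 \<or> lam^2 = 1 \<or> lam^2 = (of_real x)^2"
  shows "norm lam \<le> x"
proof -
  consider "lam = 0" | "lam^2 = 1" | "lam^2 = (of_real x)^2" using assms(2) by blast
  then show ?thesis
  proof cases
    case 1 then show ?thesis using assms(1) by simp
  next
    case 2
    then have "norm lam ^ 2 = 1^2" by (metis norm_one norm_power power_one)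
    then have "norm lam = 1" by (rule power2_eq_imp_eq) auto
    then show ?thesis using assms(1) by simp
  next
    case 3
    then have "norm lam ^ 2 = x^2" by (metis norm_of_real norm_power assms(1) abs_of_nonneg order_trans zero_le_one)
    then have "norm lam = x" by (rule power2_eq_imp_eq) (use assms(1) in auto)
    then show ?thesis by simp
  qed
qed

theorem proposition2:
  fixes N n :: nat and E :: "nat \<Rightarrow> nat \<Rightarrow> bool"
  assumes "N \<ge> 2"
    and "simple_graph n E" and "connected_graph n E" and "bipartite_graph n E"
    and "\<exists>p q. E p q"
    and "\<And>p q j. E p q \<Longrightarrow> j \<ge> 1 \<Longrightarrow>
           real_of_int ((adj_mat n E ^\<^sub>m (2 * j + 1)) $$ (p, q))
             = ((real N - 1) ^ (2 * j + 1) + 1) / real N"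
  shows "spectral_radius (map_mat of_int (adj_mat n E)) = real N - 1
         \<and> (\<forall>v < n. degree n E v = N - 1)"
proof -
  define x where "x = real N - 1"
  have x1: "x \<ge> 1" using assms(1) by (simp add: x_def)
  have xN: "x + 1 = real N" by (simp add: x_def)
  from assms(2) have sym: "\<And>i j. E i j \<Longrightarrow> E j i" and rng: "\<And>i j. E i j \<Longrightarrow> i < n \<and> j < n"
    and irr: "\<And>i. \<not> E i i" unfolding simple_graph_def by auto
  from assms(4) obtain S where bip: "\<And>i j. E i j \<Longrightarrow> (i \<in> S \<longleftrightarrow> j \<notin> S)"
    unfolding bipartite_graph_def by auto
  have hyp: "\<And>p q j. E p q \<Longrightarrow> (j::nat) \<ge> 1 \<Longrightarrow> Wr n E (2*j+1) p q = (x^(2*j+1)+1)/(x+1)"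
  proof -
    fix p q and j :: nat assume e: "E p q" and j: "j \<ge> 1"
    have pq: "p < n" "q < n" using rng[OF e] by auto
    show "Wr n E (2*j+1) p q = (x^(2*j+1)+1)/(x+1)"
      using assms(6)[OF e j] W_mat[OF pq, of E "2*j+1"] xN by (simp add: x_def)
  qed
  note ctx = sym rng bip x1 hyp
  obtain p0 q0 where e0: "E p0 q0" using assms(5) by auto
  have n0: "n > 0" using rng[OF e0] by auto
  let ?A = "map_mat of_int (adj_mat n E) :: complex mat"
  have A: "?A \<in> carrier_mat n n" by (rule cadj_carrier)
  have bound: "norm lam \<le> x" if ev: "eigenvalue ?A lam" for lam
  proof (cases "x = 1")
    case True
    have "(\<Sum>i<4. of_real (cZ1 i) * lam^i) = 0"
      by (rule eig_poly[OF relZ1[OF ctx True] ev])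
    then have "lam^3 - lam = 0" by (simp add: sum4 cZ1_def algebra_simps)
    moreover have "lam^3 - lam = lam * (lam^2 - 1)" by (simp add: algebra_simps eval_nat_numeral)
    ultimately have "lam = 0 \<or> lam^2 = 1" by simp
    then show ?thesis using norm_sq_cases[OF x1] by blast
  next
    case False
    define X where "X = (of_real x :: complex)"
    have "(\<Sum>i<6. of_real (cZ x i) * lam^i) = 0"
      by (rule eig_poly[OF relZ[OF ctx] ev])
    then have "X^2 * lam - (X^2 + 1) * lam^3 + lam^5 = 0"
      by (simp add: sum6 cZ_def X_def algebra_simps)
    moreover have "X^2 * lam - (X^2 + 1) * lam^3 + lam^5 = lam * (lam^2 - 1) * (lam^2 - X^2)"
      by (simp add: algebra_simps eval_nat_numeral)
    ultimately have "lam = 0 \<or> lam^2 = 1 \<or> lam^2 = X^2" by simp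
    then show ?thesis using norm_sq_cases[OF x1] unfolding X_def by blast
  qed
  have evx: "eigenvalue ?A (of_real x)"
  proof (cases "x = 1")
    case True show ?thesis by (rule eig_eq1[OF ctx True e0])
  next
    case False then have "x > 1" using x1 by simp
    then show ?thesis using eig_gt[OF ctx] e0 by blast
  qed
  have SR: "spectral_radius ?A = x"
  proof (rule antisym)
    from spectral_radius_mem_max(1)[OF A n0] obtain lam where
      lam: "lam \<in> spectrum ?A" and sr: "spectral_radius ?A = norm lam" by auto
    from lam have "eigenvalue ?A lam" unfolding spectrum_def by simp
    then show "spectral_radius ?A \<le> x" using bound sr by simp
  next
    have "of_real x \<in> spectrum ?A" using evx unfolding spectrum_def by simp
    then have "norm (of_real x :: complex) \<in> norm ` spectrum ?A" by (rule imageI)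
    then have "norm (of_real x :: complex) \<le> spectral_radius ?A"
      by (rule spectral_radius_mem_max(2)[OF A n0])
    then show "x \<le> spectral_radius ?A" using x1 by simp
  qed
  have deg: "degree n E v = N - 1" if v: "v < n" for v
  proof -
    have p0q0: "p0 \<noteq> q0" using e0 irr by auto
    define w where "w = (if v = p0 then q0 else p0)"
    have w: "w < n" "w \<noteq> v" using rng[OF e0] p0q0 by (auto simp: w_def)
    have "E\<^sup>*\<^sup>* v w" using assms(3) v w unfolding connected_graph_def by auto
    then obtain u where vu: "E v u"
      by (cases rule: converse_rtranclpE) (use w in auto)
    have u: "u < n" using rng[OF vu] by simp
    have dv: "real (degree n E v) \<le> x" by (rule deg_le[OF ctx v])
    have du: "real (degree n E u) \<le> x" by (rule deg_le[OF ctx u])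
    have "real (degree n E v) \<ge> x"
    proof (cases "x = 1")
      case True
      have "finite {u. u < n \<and> E v u}" by (rule finite_subset[of _ "{..<n}"]) auto
      moreover have "u \<in> {u. u < n \<and> E v u}" using u vu by simp
      ultimately have "degree n E v \<ge> 1" unfolding degree_def
        by (metis One_nat_def Suc_leI card_gt_0_iff empty_iff)
      then show ?thesis using True by simp
    next
      case False then have "x > 1" using x1 by simp
      from edge_sum[OF ctx vu this] du show ?thesis by simp
    qed
    then have "real (degree n E v) = real N - 1" using dv x_def by simp
    then show ?thesis using assms(1) by (simp add: of_nat_diff)
  qed
  show ?thesis using SR deg x_def by simp
qed

end
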